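(* Let $\mathcal{F}$ be a fusion ring with structure constants $(N_{i,j}^k)$, index $1$ being the unit. Suppose there are indices $k_0\neq k_1$ such that $N_{i,j}^{k_0}\neq0$ and $N_{i,j}^{k_1}\neq0$ for all indices $i,j\neq1$. Then $\mathcal{F}$ passes the one spectrum criterion, i.e. there are no indices $i_0,i_1,\dots,i_9$ satisfying all of the following: (1) $N_{i_4,i_1}^{i_6},\ N_{i_5,i_4}^{i_2},\ N_{i_5,i_6}^{i_3},\ N_{i_7,i_9}^{i_1},\ N_{i_2,i_7}^{i_8},\ N_{i_8,i_9}^{i_3}\neq0$; (2) $\sum_kN_{i_4,i_7}^kN_{i_5^*,i_8}^kN_{i_6,i_9^*}^k=1$; (3) $N_{i_4,i_7}^{i_0}=N_{i_5^*,i_8}^{i_0}=N_{i_6,i_9^*}^{i_0}=1$; (4) $N_{i_2,i_1}^{i_3}=0$; (5) $\sum_kN_{i_5,i_4}^kN_{i_8,i_7^*}^k=1$ or $\sum_kN_{i_2,i_4^*}^kN_{i_8,i_0^*}^k=1$ or $\sum_kN_{i_5^*,i_2}^kN_{i_0,i_7^*}^k=1$; (6) $\sum_kN_{i_5,i_0}^kN_{i_3,i_9^*}^k=1$ or $\sum_kN_{i_8,i_0^*}^kN_{i_3,i_6^*}^k=1$ or $\sum_kN_{i_5^*,i_8}^kN_{i_6,i_9^*}^k=1$; (7) $\sum_kN_{i_4,i_7}^kN_{i_6,i_9^*}^k=1$ or $\sum_kN_{i_0,i_7^*}^kN_{i_6,i_1^*}^k=1$ or $\sum_kN_{i_4^*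,i_0}^kN_{i_1,i_9^*}^k=1$.
   Context: A fusion ring is a ring which is a free $\mathbb{Z}$-module with finite basis $\{b_1,\dots,b_r\}$, $b_ib_j=\sum_kN_{i,j}^kb_k$, $N_{i,j}^k\in\mathbb{Z}_{\ge0}$, associative, unit $b_1$, duality $i\mapsto i^*$ with $N_{i,k}^1=N_{k,i}^1=\delta_{i^*,k}$, and Frobenius reciprocity $N_{i,j}^k=N_{i^*,k}^j=N_{k,j^*}^i$. (If indices as in (1)–(7) exist, the fusion ring admits no categorification; "passing the one spectrum criterion" means no such indices exist.) *)

theory Defs
  imports Main
begin

text \<open>A fusion ring of rank r with basis indexed by {1..r}, unit index 1,
  structure constants N i j k (= N_{i,j}^k, nonnegative integers) and duality d.\<close>

definition fusion_ring :: "nat \<Rightarrow> (nat \<Rightarrow> nat \<Rightarrow> nat \<Rightarrow> nat) \<Rightarrow> (nat \<Rightarrow> nat) \<Rightarrow> bool" where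
  "fusion_ring r N d \<longleftrightarrow>
     r \<ge> 1
   \<and> (\<forall>i\<in>{1..r}. \<forall>j\<in>{1..r}. \<forall>k\<in>{1..r}. \<forall>l\<in>{1..r}.
        (\<Sum>m\<in>{1..r}. N i j m * N m k l) = (\<Sum>m\<in>{1..r}. N j k m * N i m l))
   \<and> (\<forall>i\<in>{1..r}. \<forall>j\<in>{1..r}. N 1 i j = (if i = j then 1 else 0) \<and> N i 1 j = (if i = j then 1 else 0))
   \<and> (\<forall>i\<in>{1..r}. d i \<in> {1..r})
   \<and> (\<forall>i\<in>{1..r}. \<forall>k\<in>{1..r}. N i k 1 = (if d i = k then 1 else 0) \<and> N k i 1 = (if d i = k then 1 else 0))
   \<and> (\<forall>i\<in>{1..r}. \<forall>j\<in>{1..r}. \<forall>k\<in>{1..r}. N i j k = N (d i) k j \<and> N i j k = N k (d j) i)"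

definition one_spectrum_witness ::
  "nat \<Rightarrow> (nat \<Rightarrow> nat \<Rightarrow> nat \<Rightarrow> nat) \<Rightarrow> (nat \<Rightarrow> nat) \<Rightarrow>
   nat \<Rightarrow> nat \<Rightarrow> nat \<Rightarrow> nat \<Rightarrow> nat \<Rightarrow> nat \<Rightarrow> nat \<Rightarrow> nat \<Rightarrow> nat \<Rightarrow> nat \<Rightarrow> bool" where
  "one_spectrum_witness r N d i0 i1 i2 i3 i4 i5 i6 i7 i8 i9 \<longleftrightarrow>
     \<comment> \<open>(1)\<close>
     N i4 i1 i6 \<noteq> 0 \<and> N i5 i4 i2 \<noteq> 0 \<and> N i5 i6 i3 \<noteq> 0 \<and> N i7 i9 i1 \<noteq> 0 \<and> N i2 i7 i8 \<noteq> 0 \<and> N i8 i9 i3 \<noteq> 0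
     \<comment> \<open>(2)\<close>
   \<and> (\<Sum>k\<in>{1..r}. N i4 i7 k * N (d i5) i8 k * N i6 (d i9) k) = 1
     \<comment> \<open>(3)\<close>
   \<and> N i4 i7 i0 = 1 \<and> N (d i5) i8 i0 = 1 \<and> N i6 (d i9) i0 = 1
     \<comment> \<open>(4)\<close>
   \<and> N i2 i1 i3 = 0
     \<comment> \<open>(5)\<close>
   \<and> ((\<Sum>k\<in>{1..r}. N i5 i4 k * N i8 (d i7) k) = 1
      \<or> (\<Sum>k\<in>{1..r}. N i2 (d i4) k * N i8 (d i0) k) = 1
      \<or> (\<Sum>k\<in>{1..r}. N (d i5) i2 k * N i0 (d i7) k) = 1)
     \<comment> \<open>(6)\<close>
   \<and> ((\<Sum>k\<in>{1..r}. N i5 i0 k * N i3 (d i9) k) = 1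
      \<or> (\<Sum>k\<in>{1..r}. N i8 (d i0) k * N i3 (d i6) k) = 1
      \<or> (\<Sum>k\<in>{1..r}. N (d i5) i8 k * N i6 (d i9) k) = 1)
     \<comment> \<open>(7)\<close>
   \<and> ((\<Sum>k\<in>{1..r}. N i4 i7 k * N i6 (d i9) k) = 1
      \<or> (\<Sum>k\<in>{1..r}. N i0 (d i7) k * N i6 (d i1) k) = 1
      \<or> (\<Sum>k\<in>{1..r}. N (d i4) i0 k * N i1 (d i9) k) = 1)"

definition passes_one_spectrum :: "nat \<Rightarrow> (nat \<Rightarrow> nat \<Rightarrow> nat \<Rightarrow> nat) \<Rightarrow> (nat \<Rightarrow> nat) \<Rightarrow> bool" where
  "passes_one_spectrum r N d \<longleftrightarrow>
     \<not> (\<exists>i0\<in>{1..r}. \<exists>i1\<in>{1..r}. \<exists>i2\<in>{1..r}. \<exists>i3\<in>{1..r}. \<exists>i4\<in>{1..r}.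
         \<exists>i5\<in>{1..r}. \<exists>i6\<in>{1..r}. \<exists>i7\<in>{1..r}. \<exists>i8\<in>{1..r}. \<exists>i9\<in>{1..r}.
         one_spectrum_witness r N d i0 i1 i2 i3 i4 i5 i6 i7 i8 i9)"

end

theory Submission
  imports Defs
begin

lemma sum_two_ge:
  fixes f :: "nat \<Rightarrow> nat"
  assumes "k0 \<in> {1..r}" "k1 \<in> {1..r}" "k0 \<noteq> k1" "f k0 \<noteq> 0" "f k1 \<noteq> 0"
  shows "(\<Sum>k\<in>{1..r}. f k) \<ge> 2"
proof -
  have "(\<Sum>k\<in>{k0,k1}. f k) \<le> (\<Sum>k\<in>{1..r}. f k)"
    by (rule sum_mono2) (use assms in auto)
  moreover have "(\<Sum>k\<in>{k0,k1}. f k) = f k0 + f k1" using assms by simp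
  ultimately show ?thesis using assms by linarith
qed

theorem lemma7p19:
  fixes r :: nat and N :: "nat \<Rightarrow> nat \<Rightarrow> nat \<Rightarrow> nat" and d :: "nat \<Rightarrow> nat" and k0 k1 :: nat
  assumes "fusion_ring r N d"
    and "k0 \<in> {1..r}" and "k1 \<in> {1..r}" and "k0 \<noteq> k1"
    and "\<forall>i\<in>{1..r}. \<forall>j\<in>{1..r}. i \<noteq> 1 \<and> j \<noteq> 1 \<longrightarrow> N i j k0 \<noteq> 0 \<and> N i j k1 \<noteq> 0"
  shows "passes_one_spectrum r N d"
proof -
  note F = assms(1)[unfolded fusion_ring_def]
  note Fs = conjunct1[OF F] conjunct1[OF conjunct2[OF F]] conjunct1[OF conjunct2[OF conjunct2[OF F]]]
    conjunct1[OF conjunct2[OF conjunct2[OF conjunct2[OF F]]]]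
    conjunct1[OF conjunct2[OF conjunct2[OF conjunct2[OF conjunct2[OF F]]]]]
    conjunct2[OF conjunct2[OF conjunct2[OF conjunct2[OF conjunct2[OF F]]]]]
  have one: "1 \<in> {1..r}" using Fs(1) by auto
  have U1: "\<And>i j. i \<in> {1..r} \<Longrightarrow> j \<in> {1..r} \<Longrightarrow> N 1 i j = (if i = j then 1 else 0)"
    using Fs(3) by simp
  have U2: "\<And>i j. i \<in> {1..r} \<Longrightarrow> j \<in> {1..r} \<Longrightarrow> N i 1 j = (if i = j then 1 else 0)"
    using Fs(3) by simp
  have D: "\<And>i. i \<in> {1..r} \<Longrightarrow> d i \<in> {1..r}" using Fs(4) by simp
  have C1: "\<And>i k. i \<in> {1..r} \<Longrightarrow> k \<in> {1..r} \<Longrightarrow> N i k 1 = (if d i = k then 1 else 0)"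
    using Fs(5) by simp
  have FR1: "\<And>i j k. i \<in> {1..r} \<Longrightarrow> j \<in> {1..r} \<Longrightarrow> k \<in> {1..r} \<Longrightarrow> N i j k = N (d i) k j"
    using Fs(6) by blast
  have FR2: "\<And>i j k. i \<in> {1..r} \<Longrightarrow> j \<in> {1..r} \<Longrightarrow> k \<in> {1..r} \<Longrightarrow> N i j k = N k (d j) i"
    using Fs(6) by blast
  have d1: "\<And>i. i \<in> {1..r} \<Longrightarrow> d i = 1 \<Longrightarrow> i = 1"
  proof -
    fix i assume i: "i \<in> {1..r}" and di: "d i = 1"
    have "N i 1 1 = (if i = 1 then 1 else 0)" using U2[OF i one] .
    moreover have "N i 1 1 = 1" using C1[OF i one] di by simp
    ultimately show "i = 1" by (cases "i = 1") auto
  qed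
  show ?thesis unfolding passes_one_spectrum_def
  proof (rule notI)
    assume "\<exists>i0\<in>{1..r}. \<exists>i1\<in>{1..r}. \<exists>i2\<in>{1..r}. \<exists>i3\<in>{1..r}. \<exists>i4\<in>{1..r}.
         \<exists>i5\<in>{1..r}. \<exists>i6\<in>{1..r}. \<exists>i7\<in>{1..r}. \<exists>i8\<in>{1..r}. \<exists>i9\<in>{1..r}.
         one_spectrum_witness r N d i0 i1 i2 i3 i4 i5 i6 i7 i8 i9"
    then obtain i0 i1 i2 i3 i4 i5 i6 i7 i8 i9 where
      r0: "i0 \<in> {1..r}" and r1: "i1 \<in> {1..r}" and r2: "i2 \<in> {1..r}" and r3: "i3 \<in> {1..r}"
      and r4: "i4 \<in> {1..r}" and r5: "i5 \<in> {1..r}" and r6: "i6 \<in> {1..r}" and r7: "i7 \<in> {1..r}"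
      and r8: "i8 \<in> {1..r}" and r9: "i9 \<in> {1..r}"
      and W: "one_spectrum_witness r N d i0 i1 i2 i3 i4 i5 i6 i7 i8 i9" by (elim bexE) (rule that; assumption)
    note W' = W[unfolded one_spectrum_witness_def]
    have c4: "N i2 i1 i3 = 0" using W' by (elim conjE) assumption
    have e1_1: "N i4 i1 i6 \<noteq> 0" using W' by (elim conjE) assumption
    have e1_2: "N i5 i4 i2 \<noteq> 0" using W' by (elim conjE) assumption
    have e1_3: "N i5 i6 i3 \<noteq> 0" using W' by (elim conjE) assumption
    have e1_4: "N i7 i9 i1 \<noteq> 0" using W' by (elim conjE) assumption
    have e1_5: "N i2 i7 i8 \<noteq> 0" using W' by (elim conjE) assumption
    have e1_6: "N i8 i9 i3 \<noteq> 0" using W' by (elim conjE) assumption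
    note e1 = e1_1 e1_2 e1_3 e1_4 e1_5 e1_6
    have s2: "(\<Sum>k\<in>{1..r}. N i4 i7 k * N (d i5) i8 k * N i6 (d i9) k) = 1" using W' by (elim conjE) assumption
    have rd5: "d i5 \<in> {1..r}" and rd9: "d i9 \<in> {1..r}" using D r5 r9 by auto
    consider "i4 = 1" | "i7 = 1" | "d i5 = 1" | "i8 = 1" | "i6 = 1" | "d i9 = 1"
      | "i4 \<noteq> 1" "i7 \<noteq> 1" "d i5 \<noteq> 1" "i8 \<noteq> 1" "i6 \<noteq> 1" "d i9 \<noteq> 1" by fastforce
    then show False
    proof cases
      case 1
      have "i6 = i1" using e1(1) U1[OF r1 r6] 1 by (simp split: if_splits)
      moreover have "i2 = i5" using e1(2) U2[OF r5 r2] 1 by (simp split: if_splits)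
      ultimately show False using e1(3) c4 by simp
    next
      case 2
      have "i1 = i9" using e1(4) U1[OF r9 r1] 2 by (simp split: if_splits)
      moreover have "i8 = i2" using e1(5) U2[OF r2 r8] 2 by (simp split: if_splits)
      ultimately show False using e1(6) c4 by simp
    next
      case 3
      then have 5: "i5 = 1" using d1 r5 by blast
      have "i2 = i4" using e1(2) U1[OF r4 r2] 5 by (simp split: if_splits)
      moreover have "i3 = i6" using e1(3) U1[OF r6 r3] 5 by (simp split: if_splits)
      ultimately show False using e1(1) c4 by simp
    next
      case 4
      have "i7 = d i2" using e1(5) C1[OF r2 r7] 4 by (simp split: if_splits)
      moreover have "i3 = i9" using e1(6) U1[OF r9 r3] 4 by (simp split: if_splits)
      ultimately show False using e1(4) c4 FR1[OF r2 r1 r3] by simp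
    next
      case 5
      have "i1 = d i4" using e1(1) C1[OF r4 r1] 5 by (simp split: if_splits)
      moreover have "i3 = i5" using e1(3) U2[OF r5 r3] 5 by (simp split: if_splits)
      ultimately show False using e1(2) c4 FR2[OF r5 r4 r2] by simp
    next
      case 6
      then have 9: "i9 = 1" using d1 r9 by blast
      have "i1 = i7" using e1(4) U2[OF r7 r1] 9 by (simp split: if_splits)
      moreover have "i3 = i8" using e1(6) U2[OF r8 r3] 9 by (simp split: if_splits)
      ultimately show False using e1(5) c4 by simp
    next
      case 7
      have a: "N i4 i7 k0 \<noteq> 0 \<and> N i4 i7 k1 \<noteq> 0" using assms(5) r4 r7 7(1,2) by blast
      have b: "N (d i5) i8 k0 \<noteq> 0 \<and> N (d i5) i8 k1 \<noteq> 0" using assms(5) rd5 r8 7(3,4) by blast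
      have c: "N i6 (d i9) k0 \<noteq> 0 \<and> N i6 (d i9) k1 \<noteq> 0" using assms(5) r6 rd9 7(5,6) by blast
      have "(\<Sum>k\<in>{1..r}. N i4 i7 k * N (d i5) i8 k * N i6 (d i9) k) \<ge> 2"
        by (rule sum_two_ge[OF assms(2,3,4)]) (use a b c in simp_all)
      then show False using s2 by simp
    qed
  qed
qed

end
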